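(* Let $G$ be a group and $S\subseteq G$ a locally maximal product-free set with $|S|=3$ such that every two-element subset of $S$ generates $\langle S\rangle$ and $S$ contains exactly one involution. Then either $|G|\leq 24$, or $S=\{a,b,c\}$ where $a$ and $b$ have order $3$ and $c$ is an involution.
   Context: A non-empty subset $S$ of a group $G$ is product-free if $ab \notin S$ for all $a, b \in S$. It is locally maximal product-free if it is product-free and is not properly contained in any other product-free subset of $G$. $\langle S \rangle$ denotes the subgroup generated by $S$. An involution is an element of order $2$. *)

theory Defs
  imports "HOL-Algebra.Algebra"
begin

definition product_free :: "('a, 'b) monoid_scheme \<Rightarrow> 'a set \<Rightarrow> bool" where
  "product_free G S \<longleftrightarrow> S \<noteq> {} \<and> S \<subseteq> carrier G \<and>
     (\<forall>a\<in>S. \<forall>b\<in>S. a \<otimes>\<^bsub>G\<^esub> b \<notin> S)"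

definition locally_maximal_product_free :: "('a, 'b) monoid_scheme \<Rightarrow> 'a set \<Rightarrow> bool" where
  "locally_maximal_product_free G S \<longleftrightarrow> product_free G S \<and>
     (\<forall>T. product_free G T \<and> S \<subseteq> T \<longrightarrow> T = S)"

definition involution :: "('a, 'b) monoid_scheme \<Rightarrow> 'a \<Rightarrow> bool" where
  "involution G x \<longleftrightarrow> x \<in> carrier G \<and> group.ord G x = 2"

end

theory Submission
  imports Defs
begin



context group begin

lemma pf_one_notin: "product_free G S \<Longrightarrow> \<one> \<notin> S"
  unfolding product_free_def by force

lemma cover:
  assumes lm: "locally_maximal_product_free G S" and z: "z \<in> carrier G" "z \<notin> S"
  shows "z = \<one> \<or> z \<otimes> z \<in> S \<or> (\<exists>s\<in>S. \<exists>t\<in>S. z \<otimes> s = t \<or> s \<otimes> z = t \<or> z = s \<otimes> t)"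
proof -
  have pf: "product_free G S" using lm unfolding locally_maximal_product_free_def by blast
  have S: "S \<subseteq> carrier G" using pf unfolding product_free_def by blast
  have one: "\<one> \<notin> S" using pf_one_notin[OF pf] .
  have "\<not> product_free G (insert z S)"
    using lm z unfolding locally_maximal_product_free_def by blast
  then obtain x y where xy: "x \<in> insert z S" "y \<in> insert z S" "x \<otimes> y \<in> insert z S"
    using S z unfolding product_free_def by blast
  show ?thesis
  proof (cases "x = z")
    case True
    show ?thesis
    proof (cases "y = z")
      case True
      with \<open>x = z\<close> xy show ?thesis using z by (cases "z \<otimes> z = z") (auto)
    next
      case False
      then have y: "y \<in> S" using xy by auto
      show ?thesis
      proof (cases "x \<otimes> y = z")
        case True
        then have "y = \<one>" using \<open>x = z\<close> z y S by auto
        then show ?thesis using y one by auto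
      next
        case False then show ?thesis using xy y \<open>x = z\<close> by auto
      qed
    qed
  next
    case False
    then have x: "x \<in> S" using xy by auto
    show ?thesis
    proof (cases "y = z")
      case True
      show ?thesis
      proof (cases "x \<otimes> y = z")
        case True
        then have "x = \<one>" using \<open>y = z\<close> z x S by auto
        then show ?thesis using x one by auto
      next
        case False then show ?thesis using xy x \<open>y = z\<close> by auto
      qed
    next
      case False
      then have y: "y \<in> S" using xy by auto
      have "x \<otimes> y \<notin> S" using pf x y unfolding product_free_def by blast
      then have "x \<otimes> y = z" using xy by auto
      then show ?thesis using x y by auto
    qed
  qed
qed

end



lemma dvd_small:
  fixes m x :: int
  assumes "0 < m" "-4*m < x" "x < 4*m"
  shows "(2*m dvd x) = (x = -2*m \<or> x = 0 \<or> x = 2*m)"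
proof
  assume "2*m dvd x"
  then obtain k where k0: "x = 2*m*k" by (auto simp: dvd_def)
  then have k: "x = 2*(k*m)" by (simp add: mult.commute mult.left_commute)
  have "-2 < k" proof (rule ccontr)
    assume "\<not> -2 < k" then have "k \<le> -2" by simp
    then have "k*m \<le> (-2)*m" using assms(1) by (intro mult_right_mono) auto
    then show False using assms(2) k by linarith
  qed
  moreover have "k < 2" proof (rule ccontr)
    assume "\<not> k < 2" then have "k \<ge> 2" by simp
    then have "2*m \<le> k*m" using assms(1) by (intro mult_right_mono) auto
    then show False using assms(3) k by linarith
  qed
  ultimately have "k = -1 \<or> k = 0 \<or> k = 1" by auto
  then show "x = -2*m \<or> x = 0 \<or> x = 2*m" using k by auto
next
  assume "x = -2*m \<or> x = 0 \<or> x = 2*m" then show "2*m dvd x" by auto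
qed


context group begin

lemma eqP: "g \<in> carrier G \<Longrightarrow> (g [^] (i::int) = g [^] (j::int)) = (int (ord g) dvd (j - i))"
  by (rule int_pow_eq)

lemma mulP: "g \<in> carrier G \<Longrightarrow> g [^] (i::int) \<otimes> g [^] (j::int) = g [^] (i + j)"
  by (simp add: int_pow_mult)

lemma coverP:
  assumes lm: "locally_maximal_product_free G {g [^] (1::int), g [^] (e::int), g [^] (m::int)}"
    and g: "g \<in> carrier G" and N: "N = int (ord g)"
    and nS: "\<not> N dvd (w - 1)" "\<not> N dvd (w - e)" "\<not> N dvd (w - m)"
  shows "N dvd w \<or> N dvd (1 - (w + w)) \<or> N dvd (e - (w + w)) \<or> N dvd (m - (w + w)) \<or>
    (\<exists>s\<in>{1,e,m}. \<exists>t\<in>{1,e,m}. N dvd (t - (w + s)) \<or> N dvd (s + t - w))"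
proof -
  let ?P = "\<lambda>k::int. g [^] k"
  have z: "?P w \<in> carrier G" using g by simp
  have "\<not> N dvd (1 - w)" "\<not> N dvd (e - w)" "\<not> N dvd (m - w)"
    using nS dvd_diff_commute by blast+
  then have "?P w \<noteq> ?P 1" "?P w \<noteq> ?P e" "?P w \<noteq> ?P m"
    by (simp_all only: eqP[OF g] N) simp_all
  then have zS: "?P w \<notin> {?P 1, ?P e, ?P m}" by blast
  from cover[OF lm z zS] show ?thesis
  proof (elim disjE)
    assume "?P w = \<one>"
    then show ?thesis by (simp add: int_pow_eq_id[OF g] N)
  next
    assume "?P w \<otimes> ?P w \<in> {?P 1, ?P e, ?P m}"
    then have "?P (w + w) = ?P 1 \<or> ?P (w + w) = ?P e \<or> ?P (w + w) = ?P m"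
      by (simp add: mulP[OF g])
    then show ?thesis by (simp only: eqP[OF g] N) blast
  next
    assume "\<exists>s\<in>{?P 1, ?P e, ?P m}. \<exists>t\<in>{?P 1, ?P e, ?P m}. ?P w \<otimes> s = t \<or> s \<otimes> ?P w = t \<or> ?P w = s \<otimes> t"
    then obtain s t where st: "s \<in> {1,e,m}" "t \<in> {1,e,m}"
      "?P w \<otimes> ?P s = ?P t \<or> ?P s \<otimes> ?P w = ?P t \<or> ?P w = ?P s \<otimes> ?P t"
      by (simp only: Bex_def insert_iff empty_iff) metis
    then have "?P (w + s) = ?P t \<or> ?P w = ?P (s + t)" by (auto simp: mulP[OF g] add.commute)
    then have "N dvd (t - (w + s)) \<or> N dvd (s + t - w)"
      by (simp only: eqP[OF g] N)
    then show ?thesis using st by blast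
  qed
qed

end



lemma half_lemma:
  fixes N k :: int
  assumes "0 \<le> N" "N dvd (k + k)" "\<not> N dvd k"
  shows "\<exists>m. N = 2*m \<and> N dvd (k - m) \<and> 0 < m"
proof -
  obtain t where t: "k + k = N * t" using assms(2) by (auto simp: dvd_def)
  have "odd t"
  proof
    assume "even t" then obtain s where "t = 2*s" by auto
    then have "k = N * s" using t by simp
    then show False using assms(3) by simp
  qed
  then obtain s where s: "t = 2*s + 1" by (metis oddE)
  have "N = 2*(k - N*s)" using t s by (simp add: algebra_simps)
  then obtain m where m: "N = 2*m" by blast
  have "k = m*t" using t m by simp
  then have "k - m = N * s" using s m by (simp add: algebra_simps)
  then have "N dvd (k - m)" by simp
  moreover have "m \<noteq> 0"
  proof
    assume "m = 0" then have "N = 0" using m by simp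
    then have "k = 0" using assms(2) by simp
    then show False using assms(3) by simp
  qed
  ultimately show ?thesis using m assms(1) by auto
qed

context group begin

lemma cyc_order:
  assumes lm: "locally_maximal_product_free G {g, h, c}"
    and g: "g \<in> carrier G" and c: "c \<in> carrier G"
    and dist: "g \<noteq> h" "g \<noteq> c" "h \<noteq> c"
    and cc: "c \<otimes> c = \<one>" "c \<noteq> \<one>"
    and gno: "ord g \<noteq> 2"
    and he: "h = g [^] (e::int)" "e = -1 \<or> e = -2"
    and gen1: "generate G {h, c} = generate G {g, h, c}"
    and gen2: "generate G {g, h} = generate G {g, h, c}"
  shows "\<exists>m. int (ord g) = 2*m \<and> c = g [^] m \<and> ((e = -1 \<and> (m = 3 \<or> m = 4)) \<or> (e = -2 \<and> m = 5))"
proof -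
  let ?P = "\<lambda>k::int. g [^] k"
  define N where "N = int (ord g)"
  have h: "h \<in> carrier G" using he g by simp
  have "c \<in> generate G {g, h, c}" by (rule generate.incl) simp
  also have "\<dots> = generate G {g, h}" using gen2 by simp
  also have "\<dots> \<subseteq> generate G {g}"
  proof (rule generate_subgroup_incl)
    show "subgroup (generate G {g}) G" by (rule generate_is_subgroup) (use g in auto)
    show "{g, h} \<subseteq> generate G {g}" using he g by (auto simp: generate_pow intro: exI[of _ "1::int"])
  qed
  also have "\<dots> = {g [^] (k::int) | k. k \<in> UNIV}" by (rule generate_pow[OF g])
  finally obtain k0 where k0: "c = ?P k0" by blast
  have "?P (k0 + k0) = \<one>" using cc k0 by (simp add: mulP[OF g])
  then have d1: "N dvd (k0 + k0)" by (simp add: int_pow_eq_id[OF g] N_def)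
  have d2: "\<not> N dvd k0" using cc k0 by (simp add: int_pow_eq_id[OF g] N_def)
  obtain m where m: "N = 2*m" "N dvd (k0 - m)" "0 < m"
    using half_lemma[OF _ d1 d2] N_def by auto
  have cm: "c = ?P m" using k0 m(2) by (simp add: eqP[OF g] N_def dvd_diff_commute)
  have m1: "m \<noteq> 1" using gno m N_def by auto
  have gP: "g = ?P 1" using g by simp
  have SP: "{g, h, c} = {?P 1, ?P e, ?P m}" using gP he cm by simp
  have lm': "locally_maximal_product_free G {?P 1, ?P e, ?P m}" using lm SP by simp
  have pf: "\<forall>x\<in>{?P 1, ?P e, ?P m}. \<forall>y\<in>{?P 1, ?P e, ?P m}. x \<otimes> y \<notin> {?P 1, ?P e, ?P m}"
    using lm' unfolding locally_maximal_product_free_def product_free_def by blast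
  have pfP: "\<not> N dvd (i + j - 1) \<and> \<not> N dvd (i + j - e) \<and> \<not> N dvd (i + j - m)"
    if "i \<in> {1, e, m}" "j \<in> {1, e, m}" for i j
  proof -
    have "?P i \<otimes> ?P j \<notin> {?P 1, ?P e, ?P m}" using pf that by blast
    then have "?P (i + j) \<notin> {?P 1, ?P e, ?P m}" by (simp add: mulP[OF g])
    then show ?thesis by (auto simp: eqP[OF g] N_def dvd_diff_commute)
  qed
  have "?P 1 \<noteq> ?P e" "?P 1 \<noteq> ?P m" "?P e \<noteq> ?P m" using dist he cm g by auto
  then have distP: "\<not> N dvd (e - 1)" "\<not> N dvd (m - 1)" "\<not> N dvd (m - e)"
    by (auto simp only: eqP[OF g] N_def)
  note cov = coverP[OF lm' g N_def]
  show ?thesis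
  proof (cases "e = -1")
    case True
    have "m = 3 \<or> m = 4"
    proof (rule ccontr)
      assume nm: "\<not> (m = 3 \<or> m = 4)"
      consider "m = 2" | "m = 5" | "m = 6" | "m \<ge> 7" using m(3) m1 nm by linarith
      then show False
      proof cases
        case 1 then show ?thesis using pfP[of 1 1] m(1) by simp
      next
        case 2 then show ?thesis using cov[of 3] m(1) True by simp
      next
        case 3 then show ?thesis using cov[of 4] m(1) True by simp
      next
        case 4 then show ?thesis using cov[of 3] m(1) True by (simp add: dvd_small)
      qed
    qed
    then show ?thesis using True m cm N_def by auto
  next
    case False
    then have e2: "e = -2" using he(2) by simp
    have "m = 5"
    proof (rule ccontr)
      assume nm: "m \<noteq> 5"
      have "m = 2 \<or> m = 3 \<or> m = 4 \<or> (even m \<and> m \<ge> 6) \<or> (odd m \<and> m \<ge> 7)" using m(3) m1 nm by presburger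
      then consider "m = 2" | "m = 3" | "m = 4" | "even m \<and> m \<ge> 6" | "odd m \<and> m \<ge> 7" by blast
      then show False
      proof cases
        case 1 then show ?thesis using distP(3) m(1) e2 by simp
      next
        case 2 then show ?thesis using pfP[of 1 m] m(1) e2 by simp
      next
        case 3 then show ?thesis using pfP[of e e] m(1) e2 by simp
      next
        case 5 then show ?thesis using cov[of 4] m(1) e2 by (simp add: dvd_small)
      next
        case 4
        then obtain m' where m': "m = 2*m'" by blast
        define EV where "EV = {x. \<exists>k. x = ?P (2*k)}"
        have "generate G {h, c} \<subseteq> EV"
        proof
          fix x assume "x \<in> generate G {h, c}"
          then show "x \<in> EV"
          proof (induction rule: generate.induct)
            case one then show ?case unfolding EV_def by (intro CollectI exI[of _ 0]) simp
          next
            case (incl x)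
            then have "x = ?P (2*(-1)) \<or> x = ?P (2*m')" using he e2 cm m' by auto
            then show ?case unfolding EV_def by blast
          next
            case (inv x)
            then have "x = ?P (2*(-1)) \<or> x = ?P (2*m')" using he e2 cm m' by auto
            then obtain k where "x = ?P (2*k)" by blast
            then have "inv x = ?P (2*(-k))" using g by (simp add: int_pow_neg)
            then show ?case unfolding EV_def by blast
          next
            case (eng x y)
            then obtain k l where "x = ?P (2*k)" "y = ?P (2*l)" unfolding EV_def by blast
            then have "x \<otimes> y = ?P (2*(k+l))" using g by (simp add: mulP distrib_left)
            then show ?case unfolding EV_def by blast
          qed
        qed
        moreover have "g \<in> generate G {h, c}" using gen1 by (auto intro: generate.incl)
        ultimately obtain k where "?P 1 = ?P (2*k)" using gP unfolding EV_def by auto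
        then have "N dvd (2*k - 1)" by (simp add: eqP[OF g] N_def)
        then have "2 dvd (2*k - 1)" using m(1) by (metis dvd_mult_left)
        then show False by presburger
      qed
    qed
    then show ?thesis using e2 m cm N_def by auto
  qed
qed

end



context group begin

lemma inv_cancel_l [simp]: "x \<in> carrier G \<Longrightarrow> z \<in> carrier G \<Longrightarrow> inv x \<otimes> (x \<otimes> z) = z"
  by (simp add: m_assoc [symmetric])

lemma inv_cancel_r [simp]: "x \<in> carrier G \<Longrightarrow> z \<in> carrier G \<Longrightarrow> x \<otimes> (inv x \<otimes> z) = z"
  by (simp add: m_assoc [symmetric])

lemma sq_conj: "y \<in> carrier G \<Longrightarrow> x \<in> carrier G \<Longrightarrow>
  (y \<otimes> x) \<otimes> (y \<otimes> x) = (y \<otimes> x \<otimes> inv y) \<otimes> (y \<otimes> y) \<otimes> x"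
  by (simp add: m_assoc)

lemma conj_hom: "y \<in> carrier G \<Longrightarrow> (\<lambda>x. y \<otimes> x \<otimes> inv y) \<in> hom G G"
  by (rule homI) (auto simp: m_assoc)

lemma conj_pow: "y \<in> carrier G \<Longrightarrow> x \<in> carrier G \<Longrightarrow>
  y \<otimes> x [^] (k::int) \<otimes> inv y = (y \<otimes> x \<otimes> inv y) [^] k"
  using hom_int_pow[OF conj_hom[of y] _ is_group is_group, of x k] by simp

lemma comm_sq: "p \<in> carrier G \<Longrightarrow> q \<in> carrier G \<Longrightarrow>
  (p \<otimes> q) \<otimes> (p \<otimes> q) = (p \<otimes> q \<otimes> inv p \<otimes> inv q) \<otimes> (q \<otimes> (p \<otimes> p) \<otimes> inv q) \<otimes> (q \<otimes> q)"
  by (simp add: m_assoc)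

lemma comm_mult: "y \<in> carrier G \<Longrightarrow> z \<in> carrier G \<Longrightarrow> w \<in> carrier G \<Longrightarrow>
  y \<otimes> (z \<otimes> w) \<otimes> inv y \<otimes> inv (z \<otimes> w) =
  (y \<otimes> z \<otimes> inv y \<otimes> inv z) \<otimes> (z \<otimes> (y \<otimes> w \<otimes> inv y \<otimes> inv w) \<otimes> inv z)"
  by (simp add: m_assoc inv_mult_group)

end



lemma num8:
  fixes ee f :: int
  assumes "ee \<in> {1,-1,4}" "f \<in> {1,-1,4}"
    "8 dvd (1 - (2*(f-ee-1)+ee+2)) \<or> 8 dvd (-1 - (2*(f-ee-1)+ee+2)) \<or> 8 dvd (4 - (2*(f-ee-1)+ee+2))"
    "8 dvd (1 - (3*(f-ee-1)+ee+3)) \<or> 8 dvd (-1 - (3*(f-ee-1)+ee+3)) \<or> 8 dvd (4 - (3*(f-ee-1)+ee+3))"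
  shows "8 dvd (f - ee)"
  using assms by (simp only: insert_iff empty_iff simp_thms) (elim disjE; simp)
lemma num10:
  fixes ee f :: int
  assumes "ee \<in> {1,-2,5}" "f \<in> {1,-2,5}"
    "10 dvd (1 - (2*(f-ee-1)+ee+2)) \<or> 10 dvd (-2 - (2*(f-ee-1)+ee+2)) \<or> 10 dvd (5 - (2*(f-ee-1)+ee+2))"
    "10 dvd (1 - (3*(f-ee-1)+ee+3)) \<or> 10 dvd (-2 - (3*(f-ee-1)+ee+3)) \<or> 10 dvd (5 - (3*(f-ee-1)+ee+3))"
  shows "10 dvd (f - ee)"
  using assms by (simp only: insert_iff empty_iff simp_thms) (elim disjE; simp)

context group begin

lemma count_fin:
  assumes g: "g \<in> carrier G" and Xs: "finite Xs" "card Xs * nat (2*m) \<le> 24"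
    and sub: "carrier G \<subseteq> (\<lambda>(x, k::int). x \<otimes> g [^] k) ` (Xs \<times> {0..<2*m})"
  shows "finite (carrier G) \<and> card (carrier G) \<le> 24"
proof -
  have fin: "finite (Xs \<times> {0..<2*m})" using Xs by simp
  have "card (carrier G) \<le> card ((\<lambda>(x, k::int). x \<otimes> g [^] k) ` (Xs \<times> {0..<2*m}))"
    using sub fin by (intro card_mono) auto
  also have "\<dots> \<le> card (Xs \<times> {0..<2*m})" using fin by (rule card_image_le)
  also have "\<dots> = card Xs * nat (2*m)" by (simp add: card_cartesian_product)
  finally show ?thesis using Xs finite_subset[OF sub finite_imageI[OF fin]] by auto
qed

lemma in_F:
  assumes g: "g \<in> carrier G" and N: "int (ord g) = 2*m" and m: "0 < m" and x: "x \<in> Xs"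
  shows "x \<otimes> g [^] (k::int) \<in> (\<lambda>(x, k::int). x \<otimes> g [^] k) ` (Xs \<times> {0..<2*m})"
proof -
  have "(k mod (2*m)) mod (2*m) = k mod (2*m)" by simp
  then have "2*m dvd (k mod (2*m) - k)" by (simp only: mod_eq_dvd_iff)
  then have "g [^] k = g [^] (k mod (2*m))"
    using g N by (simp add: int_pow_eq)
  moreover have "(x, k mod (2*m)) \<in> Xs \<times> {0..<2*m}" using x m by simp
  ultimately show ?thesis by (auto intro!: image_eqI[of _ _ "(x, k mod (2*m))"])
qed

lemma bound:
  assumes lm: "locally_maximal_product_free G {g [^] (1::int), g [^] (e::int), g [^] (m::int)}"
    and g: "g \<in> carrier G" and N: "int (ord g) = 2*m"
    and cases: "(e = -1 \<and> (m = 3 \<or> m = 4)) \<or> (e = -2 \<and> m = 5)"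
  shows "finite (carrier G) \<and> card (carrier G) \<le> 24"
proof -
  let ?P = "\<lambda>k::int. g [^] k"
  define H where "H = range ?P"
  define S where "S = {?P 1, ?P e, ?P m}"
  define F where "F = (\<lambda>(x, k::int). x \<otimes> g [^] k)"
  have m0: "0 < m" using cases by auto
  have PH: "?P k \<in> H" for k unfolding H_def by simp
  have Hc: "H \<subseteq> carrier G" unfolding H_def using g by auto
  have HP: "x \<in> H \<Longrightarrow> \<exists>k. x = ?P k" for x unfolding H_def by auto
  have mulP': "?P i \<otimes> ?P j = ?P (i + j)" for i j using g by (simp add: mulP)
  have invP: "inv (?P i) = ?P (- i)" for i using g by (simp add: int_pow_neg)
  have inS: "?P x \<in> S \<longleftrightarrow> (2*m) dvd (1 - x) \<or> (2*m) dvd (e - x) \<or> (2*m) dvd (m - x)" for x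
    unfolding S_def insert_iff empty_iff by (simp only: int_pow_eq[OF g] N) simp
  have SH: "S \<subseteq> H" unfolding S_def using PH by auto
  have lmS: "locally_maximal_product_free G S" using lm S_def by simp
  have sqH: "y \<otimes> y \<in> S" if y: "y \<in> carrier G" "y \<notin> H" for y
  proof -
    have yS: "y \<notin> S" using y SH by auto
    have y1: "y \<noteq> \<one>" using y PH[of 0] g by auto
    have noS: "\<not> (\<exists>s\<in>S. \<exists>t\<in>S. y \<otimes> s = t \<or> s \<otimes> y = t \<or> y = s \<otimes> t)"
    proof
      assume "\<exists>s\<in>S. \<exists>t\<in>S. y \<otimes> s = t \<or> s \<otimes> y = t \<or> y = s \<otimes> t"
      then obtain i j where ij: "y \<otimes> ?P i = ?P j \<or> ?P i \<otimes> y = ?P j \<or> y = ?P i \<otimes> ?P j"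
        using SH HP by (metis subsetD)
      have "y = ?P j \<otimes> inv (?P i) \<or> y = inv (?P i) \<otimes> ?P j \<or> y = ?P i \<otimes> ?P j"
        using ij y g by (auto simp: inv_solve_right inv_solve_left)
      then have "y \<in> H" using PH by (auto simp: invP mulP')
      then show False using y by simp
    qed
    show ?thesis using cover[OF lmS y(1) yS] y1 noS by blast
  qed
  have SP: "x \<in> S \<Longrightarrow> \<exists>a\<in>{1,e,m}. x = ?P a" for x unfolding S_def by auto
  have conj: "\<exists>ee f. ee \<in> {1,e,m} \<and> f \<in> {1,e,m} \<and> y \<otimes> y = ?P ee \<and>
      (\<forall>k. y \<otimes> ?P k \<otimes> inv y = ?P ((f - ee - 1) * k)) \<and>
      (\<forall>j. ?P (j*(f - ee - 1) + ee + j) \<in> S)"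
    if y: "y \<in> carrier G" "y \<notin> H" for y
  proof -
    obtain ee where ee: "ee \<in> {1,e,m}" "y \<otimes> y = ?P ee" using sqH[OF y] SP by blast
    have yg: "y \<otimes> g \<notin> H"
    proof
      assume "y \<otimes> g \<in> H"
      then obtain i where "y \<otimes> g = ?P i" using HP by blast
      then have "y = ?P i \<otimes> inv g" using y g by (simp add: inv_solve_right)
      then have "y = ?P (i - 1)" using g by (simp add: int_pow_diff)
      then show False using y PH by simp
    qed
    obtain f where f: "f \<in> {1,e,m}" "(y \<otimes> g) \<otimes> (y \<otimes> g) = ?P f"
      using sqH[OF _ yg] SP y g by blast
    define W where "W = y \<otimes> g \<otimes> inv y"
    have Wc: "W \<in> carrier G" unfolding W_def using y g by simp
    have "?P f = W \<otimes> (?P ee \<otimes> ?P 1)" using f(2) sq_conj[OF y(1) g] ee(2) g Wc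
      by (simp add: W_def m_assoc)
    then have "W = ?P f \<otimes> inv (?P ee \<otimes> ?P 1)" using Wc g by (simp add: inv_solve_right)
    then have W: "W = ?P (f - ee - 1)" by (simp add: mulP' invP) (simp add: algebra_simps)
    have conjk: "y \<otimes> ?P k \<otimes> inv y = ?P ((f - ee - 1) * k)" for k
      using conj_pow[OF y(1) g, of k] W g by (simp add: W_def int_pow_pow)
    have "?P (j*(f - ee - 1) + ee + j) \<in> S" for j
    proof -
      have yj: "y \<otimes> ?P j \<notin> H"
      proof
        assume "y \<otimes> ?P j \<in> H"
        then obtain i where "y \<otimes> ?P j = ?P i" using HP by blast
        then have "y = ?P i \<otimes> inv (?P j)" using y g by (simp add: inv_solve_right)
        then have "y = ?P (i - j)" by (simp add: invP mulP')
        then show False using y PH by simp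
      qed
      have "(y \<otimes> ?P j) \<otimes> (y \<otimes> ?P j) = (y \<otimes> ?P j \<otimes> inv y) \<otimes> (y \<otimes> y) \<otimes> ?P j"
        using sq_conj[OF y(1), of "?P j"] g by simp
      also have "\<dots> = ?P (j*(f - ee - 1) + ee + j)" using conjk ee(2) by (simp add: mulP' mult.commute)
      finally show ?thesis using sqH[OF _ yj] y g by simp
    qed
    then show ?thesis using ee f conjk by blast
  qed
  have coset: "\<exists>k. v = x \<otimes> ?P k" if xv: "x \<in> carrier G" "v \<in> carrier G" "x \<otimes> v \<in> H"
    and sqx: "\<exists>a. x \<otimes> x = ?P a" for x v
  proof -
    obtain a where a: "x \<otimes> x = ?P a" using sqx by blast
    obtain j where j: "x \<otimes> v = ?P j" using xv HP by blast
    have "v = inv x \<otimes> ?P j" using j xv g by (simp add: inv_solve_left)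
    also have "inv x = x \<otimes> inv (x \<otimes> x)" using xv by (simp add: inv_mult_group m_assoc[symmetric])
    finally have "v = x \<otimes> (?P (-a) \<otimes> ?P j)" using a xv g by (simp add: m_assoc invP)
    then show ?thesis by (auto simp: mulP')
  qed
  have sqall: "\<exists>a. x \<otimes> x = ?P a" if "x \<in> carrier G" for x
  proof (cases "x \<in> H")
    case True then obtain i where "x = ?P i" using HP by blast
    then show ?thesis by (auto simp: mulP')
  next
    case False then show ?thesis using sqH[OF that] SP by blast
  qed
  have Hinv: "x \<in> H \<Longrightarrow> inv x \<in> H" for x using HP PH invP by metis
  have Fin1: "x \<in> F ` (Xs \<times> {0..<2*m})" if xH: "x \<in> H" and one: "\<one> \<in> Xs" for x Xs
  proof -
    obtain k where "x = ?P k" using HP xH by blast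
    then have "x = \<one> \<otimes> ?P k" using g by simp
    then show ?thesis using in_F[OF g N m0 one, of k] unfolding F_def by simp
  qed
  have Fin2: "x \<otimes> ?P k \<in> F ` (Xs \<times> {0..<2*m})" if "x \<in> Xs" for x k Xs
    using in_F[OF g N m0 that, of k] unfolding F_def by simp
  show ?thesis
  proof (cases "m = 3")
    case False
    have em: "(e = -1 \<and> m = 4) \<or> (e = -2 \<and> m = 5)" using cases False by auto
    have invall: "y \<otimes> ?P k \<otimes> inv y = ?P (-k)" if y: "y \<in> carrier G" "y \<notin> H" for y k
    proof -
      obtain ee f where ef: "ee \<in> {1,e,m}" "f \<in> {1,e,m}"
        "\<forall>k. y \<otimes> ?P k \<otimes> inv y = ?P ((f - ee - 1) * k)"
        "\<forall>j. ?P (j*(f - ee - 1) + ee + j) \<in> S"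
        using conj[OF y] by blast
      have A: "?P (2*(f - ee - 1) + ee + 2) \<in> S" "?P (3*(f - ee - 1) + ee + 3) \<in> S"
        using ef(4) by blast+
      have "2*m dvd (f - ee)" using em
      proof (elim disjE conjE)
        assume "e = -1" "m = 4" then show ?thesis using num8[of ee f] ef(1,2) A unfolding inS by simp
      next
        assume "e = -2" "m = 5" then show ?thesis using num10[of ee f] ef(1,2) A unfolding inS by simp
      qed
      moreover have "-k - (f - ee - 1) * k = (f - ee) * (-k)" by (simp add: algebra_simps)
      ultimately have "2*m dvd (-k - (f - ee - 1) * k)" by (metis dvd_mult2)
      then have "?P ((f - ee - 1) * k) = ?P (-k)" using g N by (simp add: int_pow_eq)
      then show ?thesis using ef(3) by simp
    qed
    show ?thesis
    proof (cases "carrier G \<subseteq> H")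
      case True
      have "carrier G \<subseteq> F ` ({\<one>} \<times> {0..<2*m})" using True by (intro subsetI Fin1) auto
      then show ?thesis using count_fin[OF g, of "{\<one>}" m] em unfolding F_def by auto
    next
      case False
      then obtain y where y: "y \<in> carrier G" "y \<notin> H" by blast
      have cov2: "z \<in> H \<or> (\<exists>k. z = y \<otimes> ?P k)" if z: "z \<in> carrier G" for z
      proof (cases "z \<in> H")
        case zH: False
        define w where "w = inv y \<otimes> z"
        have wc: "w \<in> carrier G" using y z by (simp add: w_def)
        have "w \<in> H"
        proof (rule ccontr)
          assume wH: "w \<notin> H"
          have "w \<otimes> ?P 1 \<otimes> inv w = inv y \<otimes> (z \<otimes> ?P 1 \<otimes> inv z) \<otimes> inv (inv y)"
            using y z g by (simp add: w_def m_assoc inv_mult_group)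
          also have "\<dots> = inv y \<otimes> ?P (-1) \<otimes> inv (inv y)" using invall[OF z zH, of 1] by simp
          also have "\<dots> = ?P 1"
          proof -
            have iy: "inv y \<notin> H" using Hinv[of "inv y"] y by auto
            show ?thesis using invall[OF inv_closed[OF y(1)] iy, of "-1"] by simp
          qed
          finally have "?P (-1) = ?P 1" using invall[OF wc wH, of 1] by simp
          then have "2*m dvd (1 - (-1))" by (simp only: int_pow_eq[OF g] N)
          then show False using em by auto
        qed
        then obtain k where "w = ?P k" using HP by blast
        then have "z = y \<otimes> ?P k" using y z g by (simp add: w_def inv_solve_left')
        then show ?thesis by blast
      qed simp
      have "carrier G \<subseteq> F ` ({\<one>, y} \<times> {0..<2*m})"
      proof
        fix x assume x: "x \<in> carrier G"
        from cov2[OF x] show "x \<in> F ` ({\<one>, y} \<times> {0..<2*m})"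
        proof (elim disjE exE)
          assume "x \<in> H" then show ?thesis by (rule Fin1) simp
        next
          fix k assume "x = y \<otimes> ?P k" then show ?thesis using Fin2[of y "{\<one>, y}" k] by simp
        qed
      qed
      moreover have "card {\<one>, y} \<le> 2" by (simp add: card_insert_le_m1)
      ultimately show ?thesis using count_fin[OF g, of "{\<one>, y}" m] em unfolding F_def
        by (auto simp: mult_le_mono1)
    qed
  next
    case True
    have e1: "e = -1" using cases True by auto
    have inS6: "?P x \<in> S \<longleftrightarrow> odd x" for x unfolding inS using True e1 by presburger
    have sqodd: "\<exists>a. odd a \<and> y \<otimes> y = ?P a" if "y \<in> carrier G" "y \<notin> H" for y
      using sqH[OF that] SP inS6 by metis
    have conjodd: "\<exists>d. odd d \<and> (\<forall>k. q \<otimes> ?P k \<otimes> inv q = ?P (d*k))" if q: "q \<in> carrier G" for q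
    proof (cases "q \<in> H")
      case True
      then obtain j where "q = ?P j" using HP by blast
      then have "\<forall>k. q \<otimes> ?P k \<otimes> inv q = ?P (1*k)" by (simp add: invP mulP')
      then show ?thesis by (intro exI[of _ 1]) simp
    next
      case False
      obtain ee f where ef: "ee \<in> {1,e,m}" "f \<in> {1,e,m}"
        "\<forall>k. y \<otimes> ?P k \<otimes> inv y = ?P ((f - ee - 1) * k)" if "y = q" for y
        using conj[OF q False] by blast
      have "odd (f - ee - 1)" using ef(1,2) e1 True by auto
      then show ?thesis using ef(3) by blast
    qed
    have K1: "\<exists>k. odd k \<and> p \<otimes> q \<otimes> inv p \<otimes> inv q = ?P k"
      if pq: "p \<in> carrier G" "q \<in> carrier G" "p \<notin> H" "q \<notin> H" "p \<otimes> q \<notin> H" for p q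
    proof -
      obtain b where b: "odd b" "p \<otimes> p = ?P b" using sqodd pq by blast
      obtain c where c: "odd c" "q \<otimes> q = ?P c" using sqodd pq by blast
      obtain a where a: "odd a" "(p \<otimes> q) \<otimes> (p \<otimes> q) = ?P a" using sqodd pq by blast
      obtain d where d: "odd d" "\<forall>k. q \<otimes> ?P k \<otimes> inv q = ?P (d*k)" using conjodd pq by blast
      define C where "C = p \<otimes> q \<otimes> inv p \<otimes> inv q"
      have Cc: "C \<in> carrier G" using pq by (simp add: C_def)
      have "?P a = C \<otimes> ?P (d*b) \<otimes> ?P c"
        using comm_sq[OF pq(1,2)] a b c d by (simp add: C_def)
      also have "\<dots> = C \<otimes> (?P (d*b) \<otimes> ?P c)" using Cc g by (simp add: m_assoc)
      finally have "?P a = C \<otimes> (?P (d*b) \<otimes> ?P c)" .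
      then have "C = ?P a \<otimes> inv (?P (d*b) \<otimes> ?P c)" using Cc g by (simp add: inv_solve_right)
      then have "C = ?P (a - (d*b + c))" by (simp add: mulP' invP) (simp add: algebra_simps)
      moreover have "odd (d*b)" using d b by simp
      then have "odd (a - (d*b + c))" using a(1) c(1) by simp
      ultimately show ?thesis unfolding C_def by blast
    qed
    show ?thesis
    proof (cases "carrier G \<subseteq> H")
      case True
      have "carrier G \<subseteq> F ` ({\<one>} \<times> {0..<2*m})" using True by (intro subsetI Fin1) auto
      then show ?thesis using count_fin[OF g, of "{\<one>}" m] \<open>m = 3\<close> unfolding F_def by auto
    next
      case False
      then obtain y where y: "y \<in> carrier G" "y \<notin> H" by blast
      show ?thesis
      proof (cases "\<forall>z\<in>carrier G. z \<in> H \<or> (\<exists>k. z = y \<otimes> ?P k)")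
        case True
        have "carrier G \<subseteq> F ` ({\<one>, y} \<times> {0..<2*m})"
        proof
          fix x assume x: "x \<in> carrier G"
          from True[rule_format, OF x] show "x \<in> F ` ({\<one>, y} \<times> {0..<2*m})"
          proof (elim disjE exE)
            assume "x \<in> H" then show ?thesis by (rule Fin1) simp
          next
            fix k assume "x = y \<otimes> ?P k" then show ?thesis using Fin2[of y "{\<one>, y}" k] by simp
          qed
        qed
        moreover have "card {\<one>, y} \<le> 2" by (simp add: card_insert_le_m1)
        ultimately show ?thesis using count_fin[OF g, of "{\<one>, y}" m] \<open>m = 3\<close> unfolding F_def
          by auto
      next
        case False
        then obtain z where z: "z \<in> carrier G" "z \<notin> H" "\<not> (\<exists>k. z = y \<otimes> ?P k)" by blast
        have cos: "\<exists>k. v = x \<otimes> ?P k" if "x \<in> carrier G" "v \<in> carrier G" "x \<otimes> v \<in> H" for x v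
          using coset[OF that sqall[OF that(1)]] .
        have cov4: "w \<in> H \<or> (\<exists>k. w = y \<otimes> ?P k) \<or> (\<exists>k. w = z \<otimes> ?P k) \<or> (\<exists>k. w = (y \<otimes> z) \<otimes> ?P k)"
          if w: "w \<in> carrier G" for w
        proof (rule ccontr)
          assume nw: "\<not> ?thesis"
          have yz: "y \<otimes> z \<notin> H" using cos[OF y(1) z(1)] z(3) by blast
          have yw: "y \<otimes> w \<notin> H" using cos[OF y(1) w] nw by blast
          have zw: "z \<otimes> w \<notin> H" using cos[OF z(1) w] nw by blast
          have yzw: "y \<otimes> (z \<otimes> w) \<notin> H"
            using cos[of "y \<otimes> z" w] y z w nw by (metis m_assoc m_closed)
          have wH: "w \<notin> H" using nw by blast
          obtain k1 where k1: "odd k1" "y \<otimes> z \<otimes> inv y \<otimes> inv z = ?P k1"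
            using K1[OF y(1) z(1) y(2) z(2) yz] by blast
          obtain k2 where k2: "odd k2" "y \<otimes> w \<otimes> inv y \<otimes> inv w = ?P k2"
            using K1[OF y(1) w y(2) wH yw] by blast
          obtain k3 where k3: "odd k3" "y \<otimes> (z \<otimes> w) \<otimes> inv y \<otimes> inv (z \<otimes> w) = ?P k3"
            using K1[OF y(1) _ y(2) zw yzw] z w by blast
          obtain d where d: "odd d" "\<forall>k. z \<otimes> ?P k \<otimes> inv z = ?P (d*k)" using conjodd z by blast
          have "?P k3 = ?P k1 \<otimes> ?P (d * k2)"
            using comm_mult[OF y(1) z(1) w] k1 k2 k3 d by simp
          then have "?P k3 = ?P (k1 + d * k2)" by (simp add: mulP')
          then have "2*m dvd (k1 + d*k2 - k3)" using g N by (simp add: int_pow_eq)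
          then have "2 dvd (k1 + d*k2 - k3)" by (metis dvd_mult_left)
          moreover have "odd (d*k2)" using d k2 by simp
          ultimately show False using k1(1) k3(1) by simp
        qed
        have "carrier G \<subseteq> F ` ({\<one>, y, z, y \<otimes> z} \<times> {0..<2*m})"
        proof
          fix x assume x: "x \<in> carrier G"
          from cov4[OF x] show "x \<in> F ` ({\<one>, y, z, y \<otimes> z} \<times> {0..<2*m})"
          proof (elim disjE exE)
            assume "x \<in> H" then show ?thesis by (rule Fin1) simp
          next
            fix k assume "x = y \<otimes> ?P k" then show ?thesis using Fin2[of y "{\<one>, y, z, y \<otimes> z}" k] by simp
          next
            fix k assume "x = z \<otimes> ?P k" then show ?thesis using Fin2[of z "{\<one>, y, z, y \<otimes> z}" k] by simp
          next
            fix k assume "x = y \<otimes> z \<otimes> ?P k" then show ?thesis using Fin2[of "y \<otimes> z" "{\<one>, y, z, y \<otimes> z}" k] by simp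
          qed
        qed
        moreover have "card {\<one>, y, z, y \<otimes> z} \<le> 4" using card_length[of "[\<one>, y, z, y \<otimes> z]"] by simp
        ultimately show ?thesis using count_fin[OF g, of "{\<one>, y, z, y \<otimes> z}" m] \<open>m = 3\<close> unfolding F_def
          by auto
      qed
    qed
  qed
qed

end



context group begin

lemma inv_iff1: "a \<in> carrier G \<Longrightarrow> x \<in> carrier G \<Longrightarrow> (inv a = x) = (a \<otimes> x = \<one>)"
  by (metis inv_equality inv_comm r_inv)

lemma prod_c: "p \<in> carrier G \<Longrightarrow> c \<in> carrier G \<Longrightarrow> c \<otimes> c = \<one> \<Longrightarrow> p \<otimes> c = \<one> \<Longrightarrow> p = c"
  by (metis inv_equality)

lemma inv_lemma:
  assumes lm: "locally_maximal_product_free G {a, b, c}"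
    and dist: "a \<noteq> b" "a \<noteq> c" "b \<noteq> c"
    and cc: "c \<otimes> c = \<one>" and aa: "a \<otimes> a \<noteq> \<one>"
  shows "a \<otimes> (a \<otimes> a) = \<one> \<or> a \<otimes> b = \<one> \<or> a \<otimes> (a \<otimes> b) = \<one> \<or> a \<otimes> (b \<otimes> b) = \<one>"
proof -
  have pf: "product_free G {a, b, c}" using lm unfolding locally_maximal_product_free_def by blast
  have S: "a \<in> carrier G" "b \<in> carrier G" "c \<in> carrier G" using pf unfolding product_free_def by auto
  have PF: "x \<otimes> y \<notin> {a, b, c}" if "x \<in> {a,b,c}" "y \<in> {a,b,c}" for x y
    using pf that unfolding product_free_def by blast
  have one: "\<one> \<notin> {a, b, c}" using pf_one_notin[OF pf] .
  note [simp] = S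
  show ?thesis
  proof (cases "inv a \<in> {a, b, c}")
    case True
    moreover have "inv a \<noteq> a" using aa inv_iff1[of a a] by auto
    moreover have "inv a \<noteq> c"
    proof
      assume "inv a = c" then have "a \<otimes> c = \<one>" using inv_iff1 by auto
      then have "a = c" using prod_c cc by auto
      then show False using dist by simp
    qed
    ultimately have "inv a = b" by auto
    then show ?thesis using inv_iff1 by auto
  next
    case False
    have ia: "inv a \<in> carrier G" by simp
    from cover[OF lm ia False] show ?thesis
    proof (elim disjE)
      assume "inv a = \<one>" then have "a = \<one>" by (metis inv_eq_1_iff S(1))
      then show ?thesis using one by simp
    next
      assume "inv a \<otimes> inv a \<in> {a, b, c}"
      then have "inv (a \<otimes> a) \<in> {a, b, c}" by (simp add: inv_mult_group)
      then have "(a \<otimes> a) \<otimes> a = \<one> \<or> (a \<otimes> a) \<otimes> b = \<one> \<or> (a \<otimes> a) \<otimes> c = \<one>"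
        using inv_iff1[of "a \<otimes> a"] by auto
      moreover have "(a \<otimes> a) \<otimes> c \<noteq> \<one>"
      proof
        assume "(a \<otimes> a) \<otimes> c = \<one>" then have "a \<otimes> a = c" using prod_c cc by simp
        then show False using PF[of a a] by simp
      qed
      ultimately show ?thesis by (auto simp: m_assoc)
    next
      assume "\<exists>s\<in>{a, b, c}. \<exists>t\<in>{a, b, c}. inv a \<otimes> s = t \<or> s \<otimes> inv a = t \<or> inv a = s \<otimes> t"
      then obtain s t where st: "s \<in> {a, b, c}" "t \<in> {a, b, c}"
        and "inv a \<otimes> s = t \<or> s \<otimes> inv a = t \<or> inv a = s \<otimes> t" by blast
      then consider "inv a \<otimes> s = t" | "s \<otimes> inv a = t" | "inv a = s \<otimes> t" by blast
      then show ?thesis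
      proof cases
        case 1
        then have "s = a \<otimes> t" using st by (auto simp: inv_solve_left')
        then show ?thesis using PF[of a t] st by auto
      next
        case 2
        moreover have "s \<in> carrier G" "t \<in> carrier G" using st by auto
        ultimately have "s = t \<otimes> a" using inv_solve_right'[of t s a] by simp
        then show ?thesis using PF[of t a] st by auto
      next
        case 3
        then have e: "a \<otimes> (s \<otimes> t) = \<one>" using st inv_iff1[of a "s \<otimes> t"] by auto
        have nac: "a \<otimes> (a \<otimes> c) \<noteq> \<one>"
        proof
          assume "a \<otimes> (a \<otimes> c) = \<one>" then have "(a \<otimes> a) \<otimes> c = \<one>" by (simp add: m_assoc)
          then have "a \<otimes> a = c" using prod_c cc by simp
          then show False using PF[of a a] by simp
        qed
        have "s = a \<and> t = a \<or> s = a \<and> t = b \<or> s = b \<and> t = b \<or> s = b \<and> t = a \<or> s = a \<and> t = c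
          \<or> s = c \<and> t = a \<or> s = b \<and> t = c \<or> s = c \<and> t = b \<or> s = c \<and> t = c" using st by auto
        then show ?thesis
        proof (elim disjE conjE)
          assume "s = b" "t = a"
          then have "(a \<otimes> b) \<otimes> a = \<one>" using e by (simp add: m_assoc)
          then have "a \<otimes> (a \<otimes> b) = \<one>" using inv_comm[of "a \<otimes> b" a] by simp
          then show ?thesis by simp
        next
          assume "s = a" "t = c" then show ?thesis using e nac by simp
        next
          assume "s = c" "t = a"
          then have "(a \<otimes> c) \<otimes> a = \<one>" using e by (simp add: m_assoc)
          then have "a \<otimes> (a \<otimes> c) = \<one>" using inv_comm[of "a \<otimes> c" a] by simp
          then show ?thesis using nac by simp
        next
          assume "s = b" "t = c"
          then have "(a \<otimes> b) \<otimes> c = \<one>" using e by (simp add: m_assoc)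
          then have "a \<otimes> b = c" using prod_c cc by simp
          then show ?thesis using PF[of a b] by simp
        next
          assume "s = c" "t = b"
          then have "(a \<otimes> c) \<otimes> b = \<one>" using e by (simp add: m_assoc)
          then have "b \<otimes> (a \<otimes> c) = \<one>" using inv_comm[of "a \<otimes> c" b] by simp
          then have "(b \<otimes> a) \<otimes> c = \<one>" by (simp add: m_assoc)
          then have "b \<otimes> a = c" using prod_c cc by simp
          then show ?thesis using PF[of b a] by simp
        next
          assume "s = c" "t = c"
          then have "a = \<one>" using e cc by simp
          then show ?thesis using one by simp
        next
          assume "s = a" "t = a" then show ?thesis using e by simp
        next
          assume "s = a" "t = b" then show ?thesis using e by simp
        next
          assume "s = b" "t = b" then show ?thesis using e by simp
        qed
      qed
    qed
  qed
qed

end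



context group begin

lemma pow_m1: "x \<in> carrier G \<Longrightarrow> x [^] (-1::int) = inv x"
  by (simp add: int_pow_neg)

lemma pow_m2: "x \<in> carrier G \<Longrightarrow> x [^] (-2::int) = inv (x \<otimes> x)"
proof -
  assume x: "x \<in> carrier G"
  have "x [^] (2::int) = x [^] (2::nat)" by (metis int_pow_int of_nat_numeral)
  also have "\<dots> = x \<otimes> x" using x by (simp add: numeral_2_eq_2)
  finally show ?thesis using x by (simp add: int_pow_neg)
qed

lemma finish:
  assumes lm: "locally_maximal_product_free G {a, b, c}"
    and dist: "a \<noteq> b" "a \<noteq> c" "b \<noteq> c"
    and cc: "c \<otimes> c = \<one>" "c \<noteq> \<one>"
    and gen: "\<forall>T. T \<subseteq> {a, b, c} \<and> card T = 2 \<longrightarrow> generate G T = generate G {a, b, c}"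
    and gh: "(g = a \<and> h = b) \<or> (g = b \<and> h = a)"
    and gno: "ord g \<noteq> 2"
    and he: "h = g [^] (e::int)" "e = -1 \<or> e = -2"
  shows "finite (carrier G) \<and> card (carrier G) \<le> 24"
proof -
  have pf: "product_free G {a, b, c}" using lm unfolding locally_maximal_product_free_def by blast
  have S: "a \<in> carrier G" "b \<in> carrier G" "c \<in> carrier G" using pf unfolding product_free_def by auto
  have SE: "{g, h, c} = {a, b, c}" using gh by auto
  have g: "g \<in> carrier G" using gh S by auto
  have dist': "g \<noteq> h" "g \<noteq> c" "h \<noteq> c" using gh dist by auto
  have gen1: "generate G {h, c} = generate G {g, h, c}"
    using gen[rule_format, of "{h, c}"] dist' SE gh by auto
  have gen2: "generate G {g, h} = generate G {g, h, c}"
    using gen[rule_format, of "{g, h}"] dist' SE gh by auto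
  have lm': "locally_maximal_product_free G {g, h, c}" using lm SE by simp
  obtain m where m: "int (ord g) = 2*m" "c = g [^] m"
      "(e = -1 \<and> (m = 3 \<or> m = 4)) \<or> (e = -2 \<and> m = 5)"
    using cyc_order[OF lm' g S(3) dist' cc gno he gen1 gen2] by blast
  have "{g [^] (1::int), g [^] e, g [^] m} = {g, h, c}" using g he m by simp
  then have lm'': "locally_maximal_product_free G {g [^] (1::int), g [^] e, g [^] m}" using lm' by simp
  show ?thesis by (rule bound[OF lm'' g m(1) m(3)])
qed

lemma core:
  assumes lm: "locally_maximal_product_free G {a, b, c}"
    and dist: "a \<noteq> b" "a \<noteq> c" "b \<noteq> c"
    and ic: "involution G c" and na: "\<not> involution G a" and nb: "\<not> involution G b"
    and gen: "\<forall>T. T \<subseteq> {a, b, c} \<and> card T = 2 \<longrightarrow> generate G T = generate G {a, b, c}"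
  shows "(finite (carrier G) \<and> card (carrier G) \<le> 24) \<or>
    (\<exists>a' b' c'. {a, b, c} = {a', b', c'} \<and> ord a' = 3 \<and> ord b' = 3 \<and> involution G c')"
proof -
  have pf: "product_free G {a, b, c}" using lm unfolding locally_maximal_product_free_def by blast
  have S: "a \<in> carrier G" "b \<in> carrier G" "c \<in> carrier G" using pf unfolding product_free_def by auto
  have one: "\<one> \<notin> {a, b, c}" using pf_one_notin[OF pf] .
  have pow2: "x [^] (2::nat) = x \<otimes> x" if "x \<in> carrier G" for x using that by (simp add: numeral_2_eq_2)
  have pow3: "x [^] (3::nat) = x \<otimes> (x \<otimes> x)" if "x \<in> carrier G" for x
    using that by (simp add: numeral_3_eq_3 m_assoc)
  have oc: "ord c = 2" using ic unfolding involution_def by simp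
  have cc: "c \<otimes> c = \<one>" using pow_ord_eq_1[OF S(3)] oc pow2[OF S(3)] by simp
  have c1: "c \<noteq> \<one>" using oc by auto
  have nsq: "x \<otimes> x \<noteq> \<one>" if x: "x \<in> {a, b}" for x
  proof
    assume "x \<otimes> x = \<one>"
    have xc: "x \<in> carrier G" using x S by auto
    have "ord x dvd 2" using \<open>x \<otimes> x = \<one>\<close> pow2[OF xc] pow_eq_id[OF xc, of 2] by simp
    moreover have "ord x \<le> 2" using \<open>ord x dvd 2\<close> by (rule dvd_imp_le) simp
    moreover have "ord x \<noteq> 0" using \<open>ord x dvd 2\<close> by (intro notI) simp
    ultimately have "ord x = 1 \<or> ord x = 2" by linarith
    then show False
    proof
      assume "ord x = 1" then have "x = \<one>" using ord_eq_1[OF xc] by simp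
      then show False using x one by auto
    next
      assume "ord x = 2" then show False using x na nb xc unfolding involution_def by auto
    qed
  qed
  have o3: "ord x = 3" if x: "x \<in> {a, b}" and x3: "x \<otimes> (x \<otimes> x) = \<one>" for x
  proof -
    have xc: "x \<in> carrier G" using x S by auto
    have "ord x dvd 3" using x3 pow3[OF xc] pow_eq_id[OF xc, of 3] by simp
    moreover have "ord x \<le> 3" using \<open>ord x dvd 3\<close> by (rule dvd_imp_le) simp
    moreover have "ord x \<noteq> 0" using \<open>ord x dvd 3\<close> by (intro notI) simp
    moreover have "ord x \<noteq> 2" using \<open>ord x dvd 3\<close> by (intro notI) simp
    ultimately have "ord x = 1 \<or> ord x = 3" by linarith
    moreover have "ord x \<noteq> 1" using ord_eq_1[OF xc] x one by auto
    ultimately show ?thesis by simp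
  qed
  have IA: "a \<otimes> (a \<otimes> a) = \<one> \<or> a \<otimes> b = \<one> \<or> a \<otimes> (a \<otimes> b) = \<one> \<or> a \<otimes> (b \<otimes> b) = \<one>"
    using inv_lemma[OF lm dist cc nsq[of a]] by simp
  have lmb: "locally_maximal_product_free G {b, a, c}" using lm by (simp add: insert_commute)
  have IB: "b \<otimes> (b \<otimes> b) = \<one> \<or> b \<otimes> a = \<one> \<or> b \<otimes> (b \<otimes> a) = \<one> \<or> b \<otimes> (a \<otimes> a) = \<one>"
    using inv_lemma[OF lmb dist(1)[symmetric] dist(3) dist(2) cc nsq[of b]] by simp
  have ogA: "ord a \<noteq> 2" "ord b \<noteq> 2" using na nb S unfolding involution_def by auto
  note fin = finish[OF lm dist cc c1 gen]
  show ?thesis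
  proof (cases "a \<otimes> (a \<otimes> a) = \<one> \<and> b \<otimes> (b \<otimes> b) = \<one>")
    case True
    then have "ord a = 3" "ord b = 3" using o3 by auto
    then show ?thesis using ic by blast
  next
    case False
    then consider "a \<otimes> b = \<one>" | "a \<otimes> (a \<otimes> b) = \<one>" | "a \<otimes> (b \<otimes> b) = \<one>"
      | "b \<otimes> a = \<one>" | "b \<otimes> (b \<otimes> a) = \<one>" | "b \<otimes> (a \<otimes> a) = \<one>" using IA IB by blast
    then show ?thesis
    proof cases
      case 1
      then have "inv a = b" using inv_iff1[OF S(1) S(2)] by simp
      then have "b = a [^] (-1::int)" using pow_m1[OF S(1)] by simp
      then show ?thesis using fin[of a b "-1"] ogA by simp
    next
      case 2
      then have "(a \<otimes> a) \<otimes> b = \<one>" using S by (simp add: m_assoc)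
      then have "inv (a \<otimes> a) = b" using inv_iff1[of "a \<otimes> a" b] S by simp
      then have "b = a [^] (-2::int)" using pow_m2[OF S(1)] by simp
      then show ?thesis using fin[of a b "-2"] ogA by simp
    next
      case 3
      then have "(b \<otimes> b) \<otimes> a = \<one>" using S inv_comm[of a "b \<otimes> b"] by simp
      then have "inv (b \<otimes> b) = a" using inv_iff1[of "b \<otimes> b" a] S by simp
      then have "a = b [^] (-2::int)" using pow_m2[OF S(2)] by simp
      then show ?thesis using fin[of b a "-2"] ogA by simp
    next
      case 4
      then have "inv b = a" using inv_iff1[OF S(2) S(1)] by simp
      then have "a = b [^] (-1::int)" using pow_m1[OF S(2)] by simp
      then show ?thesis using fin[of b a "-1"] ogA by simp
    next
      case 5
      then have "(b \<otimes> b) \<otimes> a = \<one>" using S by (simp add: m_assoc)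
      then have "inv (b \<otimes> b) = a" using inv_iff1[of "b \<otimes> b" a] S by simp
      then have "a = b [^] (-2::int)" using pow_m2[OF S(2)] by simp
      then show ?thesis using fin[of b a "-2"] ogA by simp
    next
      case 6
      then have "(a \<otimes> a) \<otimes> b = \<one>" using S inv_comm[of b "a \<otimes> a"] by simp
      then have "inv (a \<otimes> a) = b" using inv_iff1[of "a \<otimes> a" b] S by simp
      then have "b = a [^] (-2::int)" using pow_m2[OF S(1)] by simp
      then show ?thesis using fin[of a b "-2"] ogA by simp
    qed
  qed
qed

end

theorem lemma2p3:
  fixes G (structure) and S :: "'a set"
  assumes "group G"
    and "locally_maximal_product_free G S"
    and "card S = 3"
    and "\<forall>T. T \<subseteq> S \<and> card T = 2 \<longrightarrow> generate G T = generate G S"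
    and "card {x \<in> S. involution G x} = 1"
  shows "(finite (carrier G) \<and> card (carrier G) \<le> 24) \<or>
         (\<exists>a b c. S = {a, b, c} \<and> group.ord G a = 3 \<and> group.ord G b = 3 \<and> involution G c)"
proof -
  let ?G = "(finite (carrier G) \<and> card (carrier G) \<le> 24) \<or>
         (\<exists>a b c. S = {a, b, c} \<and> group.ord G a = 3 \<and> group.ord G b = 3 \<and> involution G c)"
  obtain x y z where S: "S = {x, y, z}" "x \<noteq> y" "y \<noteq> z" "x \<noteq> z"
    using assms(3) unfolding card_3_iff by blast
  obtain c0 where c0: "{w \<in> S. involution G w} = {c0}" using assms(5) card_1_singletonE by blast
  have c0S: "c0 \<in> S" "involution G c0" using c0 by blast+
  have oth: "w \<in> S \<Longrightarrow> w \<noteq> c0 \<Longrightarrow> \<not> involution G w" for w using c0 by blast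
  have C: "\<And>a b c. S = {a, b, c} \<Longrightarrow> a \<noteq> b \<Longrightarrow> a \<noteq> c \<Longrightarrow> b \<noteq> c \<Longrightarrow> c = c0 \<Longrightarrow> ?G"
  proof -
    fix a b c assume abc: "S = {a, b, c}" "a \<noteq> b" "a \<noteq> c" "b \<noteq> c" "c = c0"
    have "(finite (carrier G) \<and> card (carrier G) \<le> 24) \<or>
      (\<exists>a' b' c'. {a, b, c} = {a', b', c'} \<and> group.ord G a' = 3 \<and> group.ord G b' = 3 \<and> involution G c')"
    proof -
      have lm: "locally_maximal_product_free G {a, b, c}" using assms(2) abc(1) by simp
      have gen: "\<forall>T. T \<subseteq> {a, b, c} \<and> card T = 2 \<longrightarrow> generate G T = generate G {a, b, c}"
        using assms(4) abc(1) by simp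
      have ic: "involution G c" using c0S abc(5) by simp
      have na: "\<not> involution G a" using oth[of a] abc by blast
      have nb: "\<not> involution G b" using oth[of b] abc by blast
      show ?thesis by (rule group.core[OF assms(1) lm abc(2-4) ic na nb gen])
    qed
    then show ?G using abc by simp
  qed
  have "c0 = x \<or> c0 = y \<or> c0 = z" using c0S S by auto
  then show ?thesis
  proof (elim disjE)
    assume h: "c0 = x"
    have "S = {y, z, x}" using S(1) by blast
    then show ?thesis using C S(2-4) h by metis
  next
    assume h: "c0 = y"
    have "S = {x, z, y}" using S(1) by blast
    then show ?thesis using C S(2-4) h by metis
  next
    assume h: "c0 = z"
    show ?thesis using C S h by metis
  qed
qed



end
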